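(* Suppose $\gamma$ is oriented counterclockwise and $L_\gamma$ is Hamiltonian stationary, with nonzero constant $c$ such that $\frac{\dot w v-w\dot v+2w(v^2+w^2)}{(v^2+w^2)^{3/2}}=c$ for all $\beta$. Then $$u^*:=\int_0^{2\pi}\sqrt{v^2+w^2}\,d\beta=\frac{2(k+1)\pi}{c},$$ where $k$ is the winding number of $\gamma$ around the origin (equivalently, $f(\beta+2\pi)=f(\beta)+2k\pi$).
   Context: Let $\gamma:\mathbb{R}/2\pi\mathbb{Z}\to\mathbb{C}\setminus\{0\}$ be a smooth regular simple closed curve written as $\gamma(\beta)=\rho(\beta)e^{if(\beta)}$ with $\rho>0$ smooth and $2\pi$-periodic, $f$ smooth with $f(\beta+2\pi)=f(\beta)+2k\pi$, $k\in\mathbb{Z}$; dots denote $d/d\beta$, $v=\dot\rho/\rho$, $w=\dot f$. The twisted torus $L_\gamma\subset\mathbb{C}^2$ is the image of $F(\alpha,\beta)=\frac{\rho(\beta)}{\sqrt2}\left(e^{i(f(\beta)+\alpha)},e^{i(f(\beta)-\alpha)}\right)$. Hamiltonian stationary means critical for area under all variations with field $J\nabla h$ (equivalently $\mathrm{div}_g(JH)=0$, $g$ the induced metric, $H$ the mean curvature vector, $J$ multiplication by $i$). *)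

theory Defs
  imports "HOL-Complex_Analysis.Complex_Analysis"
begin

definition smooth_fun :: "(real \<Rightarrow> real) \<Rightarrow> bool" where
  "smooth_fun g \<longleftrightarrow> (\<forall>n x. ((deriv ^^ n) g) differentiable (at x))"

text \<open>Partial derivative of a two-variable map: True = first variable (alpha),
  False = second variable (beta).\<close>
definition pd :: "bool \<Rightarrow> (real \<Rightarrow> real \<Rightarrow> 'a::real_normed_vector) \<Rightarrow> real \<Rightarrow> real \<Rightarrow> 'a" where
  "pd first \<Phi> a b =
     (if first then vector_derivative (\<lambda>s. \<Phi> s b) (at a)
      else vector_derivative (\<lambda>s. \<Phi> a s) (at b))"

definition smooth2 :: "(real \<Rightarrow> real \<Rightarrow> real) \<Rightarrow> bool" where
  "smooth2 h \<longleftrightarrow>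
     (\<forall>ds p. (\<lambda>q::real \<times> real. foldr pd ds h (fst q) (snd q)) differentiable (at p))"

definition periodic2 :: "(real \<Rightarrow> real \<Rightarrow> real) \<Rightarrow> bool" where
  "periodic2 h \<longleftrightarrow> (\<forall>a b. h (a + 2*pi) b = h a b \<and> h a (b + 2*pi) = h a b)"

definition gE :: "(real \<Rightarrow> real \<Rightarrow> complex \<times> complex) \<Rightarrow> real \<Rightarrow> real \<Rightarrow> real" where
  "gE \<Phi> a b = inner (pd True \<Phi> a b) (pd True \<Phi> a b)"
definition gF :: "(real \<Rightarrow> real \<Rightarrow> complex \<times> complex) \<Rightarrow> real \<Rightarrow> real \<Rightarrow> real" where
  "gF \<Phi> a b = inner (pd True \<Phi> a b) (pd False \<Phi> a b)"
definition gG :: "(real \<Rightarrow> real \<Rightarrow> complex \<times> complex) \<Rightarrow> real \<Rightarrow> real \<Rightarrow> real" where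
  "gG \<Phi> a b = inner (pd False \<Phi> a b) (pd False \<Phi> a b)"

definition area :: "(real \<Rightarrow> real \<Rightarrow> complex \<times> complex) \<Rightarrow> real" where
  "area \<Phi> = integral {0..2*pi} (\<lambda>a. integral {0..2*pi} (\<lambda>b.
      sqrt (gE \<Phi> a b * gG \<Phi> a b - (gF \<Phi> a b)\<^sup>2)))"

definition Jmul :: "complex \<times> complex \<Rightarrow> complex \<times> complex" where
  "Jmul x = (\<i> * fst x, \<i> * snd x)"

text \<open>Gradient of h with respect to the induced metric, as a vector in C^2.\<close>
definition grad :: "(real \<Rightarrow> real \<Rightarrow> complex \<times> complex) \<Rightarrow> (real \<Rightarrow> real \<Rightarrow> real)
    \<Rightarrow> real \<Rightarrow> real \<Rightarrow> complex \<times> complex" where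
  "grad \<Phi> h a b =
     (let E = gE \<Phi> a b; Fm = gF \<Phi> a b; G = gG \<Phi> a b;
          ha = pd True h a b; hb = pd False h a b
      in (1 / (E * G - Fm\<^sup>2)) *\<^sub>R
           ((G * ha - Fm * hb) *\<^sub>R pd True \<Phi> a b + (E * hb - Fm * ha) *\<^sub>R pd False \<Phi> a b))"

definition ham_stationary :: "(real \<Rightarrow> real \<Rightarrow> complex \<times> complex) \<Rightarrow> bool" where
  "ham_stationary \<Phi> \<longleftrightarrow>
     (\<forall>h. smooth2 h \<and> periodic2 h \<longrightarrow>
        ((\<lambda>t. area (\<lambda>a b. \<Phi> a b + t *\<^sub>R Jmul (grad \<Phi> h a b))) has_real_derivative 0) (at 0))"

definition curve :: "(real \<Rightarrow> real) \<Rightarrow> (real \<Rightarrow> real) \<Rightarrow> real \<Rightarrow> complex" where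
  "curve \<rho> f \<beta> = complex_of_real (\<rho> \<beta>) * exp (\<i> * complex_of_real (f \<beta>))"

definition curve_path :: "(real \<Rightarrow> real) \<Rightarrow> (real \<Rightarrow> real) \<Rightarrow> real \<Rightarrow> complex" where
  "curve_path \<rho> f t = curve \<rho> f (2 * pi * t)"

definition counterclockwise :: "(real \<Rightarrow> complex) \<Rightarrow> bool" where
  "counterclockwise g \<longleftrightarrow> (\<forall>z \<in> inside (path_image g). winding_number g z = 1)"

definition twisted_torus :: "(real \<Rightarrow> real) \<Rightarrow> (real \<Rightarrow> real) \<Rightarrow> real \<Rightarrow> real \<Rightarrow> complex \<times> complex" where
  "twisted_torus \<rho> f a b =
     (complex_of_real (\<rho> b / sqrt 2) * exp (\<i> * complex_of_real (f b + a)),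
      complex_of_real (\<rho> b / sqrt 2) * exp (\<i> * complex_of_real (f b - a)))"

end

theory Submission
  imports Defs
begin


lemma ray_winding:
  fixes p :: "real \<Rightarrow> complex"
  assumes "path p" "d \<noteq> 0" "\<And>u. u \<in> {0..1} \<Longrightarrow> d * p u \<notin> \<real>\<^sub>\<le>\<^sub>0"
  shows "winding_number p 0 = (Ln (d * p 1) - Ln (d * p 0)) / (2 * of_real pi * \<i>)"
proof -
  define \<phi> where "\<phi> = (\<lambda>u. Ln (d * p u) - Ln d)"
  have cp: "continuous_on {0..1} p" using assms(1) unfolding path_def .
  have "continuous_on {0..1} (\<lambda>u. d * p u)"
    using cp by (intro continuous_intros)
  then have "continuous_on {0..1} \<phi>"
    unfolding \<phi>_def using assms(3) cp by (intro continuous_intros) auto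
  then have pp: "path \<phi>" by (simp add: path_def)
  have nz: "\<And>u. u \<in> {0..1} \<Longrightarrow> d * p u \<noteq> 0" using assms(3) by fastforce
  have "winding_number p 0 = winding_number (exp \<circ> \<phi>) 0"
  proof (rule winding_number_cong)
    fix t :: real assume "0 \<le> t" "t \<le> 1"
    then have "d * p t \<noteq> 0" using nz by auto
    then show "p t = (exp \<circ> \<phi>) t" using assms(2)
      by (simp add: \<phi>_def exp_diff)
  qed
  also have "\<dots> = (\<phi> 1 - \<phi> 0) / (2 * of_real pi * \<i>)"
    using winding_number_compose_exp[OF pp] by (simp add: pathstart_def pathfinish_def)
  finally show ?thesis by (simp add: \<phi>_def)
qed

lemma Ln_ii_pos: assumes "0 < Re w" shows "Ln (\<i> * w) = Ln w + \<i> * of_real pi / 2"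
proof -
  have "w \<noteq> 0" using assms by auto
  then show ?thesis using Ln_times_ii[of w] assms by simp
qed

lemma Ln_mii_pos: assumes "0 < Re w" shows "Ln (-\<i> * w) = Ln w - \<i> * of_real pi / 2"
proof -
  have w0: "w \<noteq> 0" using assms by auto
  have "\<bar>Im (Ln w)\<bar> < pi/2" using Re_Ln_pos_lt_imp[OF assms] .
  have e: "exp (\<i> * of_real pi / 2) = \<i>"
    using cis_conv_exp[of "pi/2"] by simp
  have "exp (Ln w - \<i> * of_real pi / 2) = w / \<i>"
    using e w0 by (simp add: exp_diff)
  also have "\<dots> = -\<i> * w" by (simp add: field_simps)
  finally show ?thesis
    using \<open>\<bar>Im (Ln w)\<bar> < pi/2\<close> by (intro Ln_unique) auto
qed

lemma zero_notin_seg: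
  fixes X Y :: complex
  assumes "norm (X - Y) < norm Y"
  shows "0 \<notin> closed_segment X Y"
proof
  assume "0 \<in> closed_segment X Y"
  then obtain t where t: "0 \<le> t" "t \<le> 1" "0 = (1 - t) *\<^sub>R X + t *\<^sub>R Y"
    by (auto simp: closed_segment_def)
  then have "Y = (1 - t) *\<^sub>R (Y - X)" by (simp add: algebra_simps)
  then have "norm Y = (1 - t) * norm (X - Y)" using t by (metis norm_minus_commute norm_scaleR abs_of_nonneg diff_ge_0_iff_ge)
  also have "\<dots> \<le> norm (X - Y)" using t by (simp add: mult_left_le_one_le)
  finally show False using assms by simp
qed

lemma per_int:
  fixes F :: "real \<Rightarrow> 'a"
  assumes "\<And>x. F (x + p) = F x"
  shows "F (x + real_of_int n * p) = F x"
proof -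
  have nat: "F (y + real m * p) = F y" for y m
  proof (induction m)
    case (Suc m)
    have "F (y + real (Suc m) * p) = F ((y + real m * p) + p)" by (simp add: algebra_simps)
    also have "\<dots> = F y" using assms Suc by simp
    finally show ?case .
  qed simp
  show ?thesis
  proof (cases "n \<ge> 0")
    case True
    then show ?thesis using nat[of x "nat n"] by simp
  next
    case False
    have "F (x + real_of_int n * p + real (nat (-n)) * p) = F (x + real_of_int n * p)"
      by (rule nat)
    then show ?thesis using False by simp
  qed
qed

lemma per_reduce:
  fixes F :: "real \<Rightarrow> 'a"
  assumes "\<And>x. F (x + p) = F x" "p > 0"
  shows "\<exists>y. a \<le> y \<and> y < a + p \<and> F x = F y \<and> (\<exists>n::int. x = y + real_of_int n * p)"
proof -
  define n where "n = \<lfloor>(x - a) / p\<rfloor>"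
  define y where "y = x - real_of_int n * p"
  have "real_of_int n \<le> (x - a) / p" "(x - a) / p < real_of_int n + 1"
    unfolding n_def by linarith+
  then have "real_of_int n * p \<le> x - a" "x - a < (real_of_int n + 1) * p"
    using assms(2) by (simp_all add: field_simps)
  then have "a \<le> y" "y < a + p" unfolding y_def by (simp_all add: algebra_simps)
  moreover have "F x = F y" using per_int[of F p y n] assms(1) by (simp add: y_def)
  ultimately show ?thesis by (intro exI[of _ y]) (auto simp: y_def)
qed


lemma hvd_Re: "(g has_vector_derivative g') F \<Longrightarrow> ((\<lambda>x. Re (g x)) has_real_derivative Re g') F"
  using bounded_linear.has_vector_derivative[OF bounded_linear_Re]
  by (simp add: has_real_derivative_iff_has_vector_derivative)

lemma hvd_Im: "(g has_vector_derivative g') F \<Longrightarrow> ((\<lambda>x. Im (g x)) has_real_derivative Im g') F"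
  using bounded_linear.has_vector_derivative[OF bounded_linear_Im]
  by (simp add: has_real_derivative_iff_has_vector_derivative)

lemma pos_nbhd:
  fixes r :: "real \<Rightarrow> real"
  assumes "isCont r a" "r a > 0"
  shows "\<exists>\<eta>>0. \<forall>x. \<bar>x - a\<bar> \<le> \<eta> \<longrightarrow> r x > 0"
proof -
  have "\<forall>\<^sub>F x in at a. 0 < r x"
    using order_tendstoD(1)[OF assms(1)[unfolded isCont_def] assms(2)] .
  then obtain d where d: "d > 0" "\<And>x. x \<noteq> a \<Longrightarrow> dist x a < d \<Longrightarrow> 0 < r x"
    unfolding eventually_at by blast
  show ?thesis
  proof (intro exI[of _ "d/2"] conjI allI impI)
    fix x assume "\<bar>x - a\<bar> \<le> d/2"
    then show "r x > 0" using d assms(2) by (cases "x = a") (auto simp: dist_real_def)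
  qed (use d in auto)
qed

lemma ray_nz:
  assumes "\<And>u. u \<in> {0..1} \<Longrightarrow> d * p u \<notin> \<real>\<^sub>\<le>\<^sub>0"
  shows "(0::complex) \<notin> path_image p"
proof
  assume "0 \<in> path_image p"
  then obtain u where "u \<in> {0..1}" "p u = 0" by (auto simp: path_image_def)
  then show False using assms[of u] by auto
qed

lemma join_path_image: "0 \<notin> path_image p \<Longrightarrow> 0 \<notin> path_image q \<Longrightarrow> 0 \<notin> path_image (p +++ q)"
  using path_image_join_subset by blast

locale hopf =
  fixes g g' :: "real \<Rightarrow> complex"
  assumes der: "\<And>t. (g has_vector_derivative g' t) (at t)"
    and g'c: "continuous_on UNIV g'"
    and per: "\<And>t. g (t + 2*pi) = g t"
    and per': "\<And>t. g' (t + 2*pi) = g' t"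
    and nz: "\<And>t. g' t \<noteq> 0"
    and inj: "\<And>s t. g s = g t \<Longrightarrow> \<exists>n::int. s - t = 2*pi*n"
    and low: "\<And>t. Im (g 0) \<le> Im (g t)"
begin

lemma gcont: "continuous_on S g"
  by (meson continuous_at_imp_continuous_on der has_vector_derivative_continuous)

lemma g'cont: "continuous_on S g'"
  using g'c continuous_on_subset by blast

lemma isCont_g': "isCont g' x"
  using g'c by (simp add: continuous_on_eq_continuous_at)

lemma g_ne: assumes "0 < h" "h < 2*pi" shows "g (s + h) \<noteq> g s"
proof
  assume "g (s + h) = g s"
  then obtain n :: int where "s + h - s = 2*pi*n" using inj by blast
  then have "h = 2*pi*n" by simp
  with assms have "0 < real_of_int n" "real_of_int n < 1"
    by (auto simp: zero_less_mult_iff)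
  then have "0 < n" "n < 1" by simp_all
  then show False by simp
qed

lemma g_ne0: assumes "0 < h" "h < 2*pi" shows "g h \<noteq> g 0"
  using g_ne[OF assms, of 0] by simp

lemma Im_g'0: "Im (g' 0) = 0"
proof -
  have "((\<lambda>t. Im (g t)) has_real_derivative Im (g' 0)) (at 0)"
    using hvd_Im[OF der] .
  then show ?thesis
    by (rule DERIV_local_min[of _ _ _ 1]) (auto simp: low)
qed

lemma Re_g'0: "Re (g' 0) \<noteq> 0"
  using Im_g'0 nz[of 0] complex_eq_iff by force

lemma incr_nbhd:
  assumes "Re (g' 0) > 0"
  shows "\<exists>\<eta>>0. \<forall>s t. -\<eta> \<le> s \<longrightarrow> s < t \<longrightarrow> t \<le> \<eta> \<longrightarrow> Re (g s) < Re (g t)"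
proof -
  have "isCont (\<lambda>x. Re (g' x)) 0" by (intro isCont_Re isCont_g')
  then obtain \<eta> where \<eta>: "\<eta> > 0" "\<And>x. \<bar>x - 0\<bar> \<le> \<eta> \<Longrightarrow> Re (g' x) > 0"
    using pos_nbhd[where r="\<lambda>x. Re (g' x)" and a=0] assms by auto
  show ?thesis
  proof (intro exI[of _ \<eta>] conjI allI impI)
    fix s t assume st: "-\<eta> \<le> s" "s < t" "t \<le> \<eta>"
    show "Re (g s) < Re (g t)"
    proof (rule DERIV_pos_imp_increasing[OF st(2)])
      fix x assume "s \<le> x" "x \<le> t"
      then show "\<exists>y. ((\<lambda>x. Re (g x)) has_real_derivative y) (at x) \<and> 0 < y"
        using st \<eta>(2)[of x] hvd_Re[OF der[of x]] by (intro exI[of _ "Re (g' x)"]) auto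
    qed
  qed (use \<eta> in auto)
qed

lemma decr_nbhd:
  assumes "Re (g' 0) < 0"
  shows "\<exists>\<eta>>0. \<forall>s t. -\<eta> \<le> s \<longrightarrow> s < t \<longrightarrow> t \<le> \<eta> \<longrightarrow> Re (g s) > Re (g t)"
proof -
  have "isCont (\<lambda>x. - Re (g' x)) 0" by (intro isCont_minus isCont_Re isCont_g')
  then obtain \<eta> where \<eta>: "\<eta> > 0" "\<And>x. \<bar>x - 0\<bar> \<le> \<eta> \<Longrightarrow> - Re (g' x) > 0"
    using pos_nbhd[where r="\<lambda>x. - Re (g' x)" and a=0] assms by auto
  show ?thesis
  proof (intro exI[of _ \<eta>] conjI allI impI)
    fix s t assume st: "-\<eta> \<le> s" "s < t" "t \<le> \<eta>"
    show "Re (g s) > Re (g t)"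
    proof (rule DERIV_neg_imp_decreasing[OF st(2)])
      fix x assume "s \<le> x" "x \<le> t"
      then show "\<exists>y. ((\<lambda>x. Re (g x)) has_real_derivative y) (at x) \<and> y < 0"
        using st \<eta>(2)[of x] hvd_Re[OF der[of x]] by (intro exI[of _ "Re (g' x)"]) auto
    qed
  qed (use \<eta> in auto)
qed

lemma min_g':
  "\<exists>m>0. \<forall>t. m \<le> norm (g' t)"
proof -
  have "\<exists>x\<in>{0..2*pi}. \<forall>y\<in>{0..2*pi}. norm (g' x) \<le> norm (g' y)"
    by (intro continuous_attains_inf) (auto intro: continuous_intros g'cont)
  then obtain x where x: "x \<in> {0..2*pi}" "\<And>y. y \<in> {0..2*pi} \<Longrightarrow> norm (g' x) \<le> norm (g' y)"
    by blast
  show ?thesis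
  proof (intro exI[of _ "norm (g' x)"] conjI allI)
    show "0 < norm (g' x)" using nz by simp
    fix t
    obtain y where y: "0 \<le> y" "y < 0 + 2*pi" "g' t = g' y"
      using per_reduce[of g' "2*pi" 0 t] per' by auto
    then show "norm (g' x) \<le> norm (g' t)" using x(2)[of y] by simp
  qed
qed

lemma near_bound:
  "\<exists>\<eta>0>0. \<forall>\<eta> s. 0 < \<eta> \<longrightarrow> \<eta> \<le> \<eta>0 \<longrightarrow> s \<in> {0..2*pi} \<longrightarrow>
      norm (g (s + \<eta>) - g s - of_real \<eta> * g' s) < norm (of_real \<eta> * g' s)"
proof -
  obtain m where m: "m > 0" "\<And>t. m \<le> norm (g' t)" using min_g' by auto
  have "uniformly_continuous_on {0..2*pi+1} g'"
    using compact_uniformly_continuous[OF g'cont] by simp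
  then obtain d where d: "d > 0" "\<And>x x'. x \<in> {0..2*pi+1} \<Longrightarrow> x' \<in> {0..2*pi+1} \<Longrightarrow> dist x' x < d \<Longrightarrow> dist (g' x') (g' x) < m/2"
    unfolding uniformly_continuous_on_def using m(1) by (metis half_gt_zero)
  show ?thesis
  proof (intro exI[of _ "min (d/2) 1"] conjI allI impI)
    fix \<eta> s assume \<eta>: "0 < \<eta>" "\<eta> \<le> min (d/2) 1" and s: "s \<in> {0..2*pi}"
    define F where "F = (\<lambda>t. g t - of_real t * g' s)"
    have "\<exists>x\<in>{s<..<s+\<eta>}. norm (F (s+\<eta>) - F s) \<le> norm (((s + \<eta>) - s) *\<^sub>R (g' x - g' s))"
    proof (rule mvt_general[where f' = "\<lambda>x h. h *\<^sub>R (g' x - g' s)"])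
      show "s < s + \<eta>" using \<eta> by simp
      show "continuous_on {s..s + \<eta>} F" unfolding F_def using gcont by (intro continuous_intros)
      fix x assume "s < x" "x < s + \<eta>"
      have "(F has_vector_derivative (g' x - 1 *\<^sub>R g' s)) (at x)"
        unfolding F_def
        by (intro derivative_eq_intros der) (auto simp: scaleR_conv_of_real der)
      then show "(F has_derivative (\<lambda>h. h *\<^sub>R (g' x - g' s))) (at x)"
        by (simp add: has_vector_derivative_def)
    qed
    then obtain x where x: "s < x" "x < s + \<eta>" "norm (F (s+\<eta>) - F s) \<le> \<eta> * norm (g' x - g' s)"
      using \<eta> by auto
    have "dist (g' x) (g' s) < m/2"
      using d(2)[of s x] s x \<eta> by (auto simp: dist_real_def)
    then have "\<eta> * norm (g' x - g' s) < \<eta> * m" using \<eta> m by (simp add: dist_norm)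
    also have "\<dots> \<le> norm (of_real \<eta> * g' s)" using \<eta> m(2)[of s] by (simp add: norm_mult)
    finally show "norm (g (s + \<eta>) - g s - of_real \<eta> * g' s) < norm (of_real \<eta> * g' s)"
      using x(3) by (simp add: F_def algebra_simps)
  qed (use d in auto)
qed

end


context hopf
begin

lemma hopf_pos:
  assumes apos: "Re (g' 0) > 0"
  shows "winding_number (\<lambda>u. g' (2*pi*u)) 0 = 1"
proof -
  obtain \<eta>1 where \<eta>1: "\<eta>1 > 0" "\<And>s t. -\<eta>1 \<le> s \<Longrightarrow> s < t \<Longrightarrow> t \<le> \<eta>1 \<Longrightarrow> Re (g s) < Re (g t)"
    using incr_nbhd[OF apos] by blast
  obtain \<eta>0 where \<eta>0: "\<eta>0 > 0" and near: "\<And>\<eta> s. 0 < \<eta> \<Longrightarrow> \<eta> \<le> \<eta>0 \<Longrightarrow> s \<in> {0..2*pi} \<Longrightarrow>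
      norm (g (s + \<eta>) - g s - of_real \<eta> * g' s) < norm (of_real \<eta> * g' s)"
    using near_bound by blast
  define \<eta> where "\<eta> = min (min \<eta>0 \<eta>1) (1/2)"
  have \<eta>: "0 < \<eta>" "\<eta> \<le> \<eta>0" "\<eta> \<le> \<eta>1" "\<eta> \<le> 1/2" using \<eta>0 \<eta>1 by (auto simp: \<eta>_def)
  have \<eta>pi: "\<eta> < pi" using \<eta>(4) pi_gt3 by linarith
  have incr: "Re (g s) < Re (g t)" if "-\<eta> \<le> s" "s < t" "t \<le> \<eta>" for s t
    using \<eta>1(2)[of s t] that \<eta>(3) by linarith
  define A where "A = (\<lambda>x::real\<times>real. g (fst x + snd x) - g (fst x))"
  define S where "S = (UNIV::real set) \<times> {0<..<2*pi}"
  have convS: "convex S" unfolding S_def by (intro convex_Times) auto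
  have AS: "A x \<noteq> 0" if "x \<in> S" for x
    using that g_ne[of "snd x" "fst x"] by (auto simp: A_def S_def)
  have Acont: "continuous_on T A" for T
    unfolding A_def by (intro continuous_on_compose2[OF gcont] continuous_intros) auto
  \<comment> \<open>first reduction: the tangent loop and the secant loop\<close>
  define L0 where "L0 = (\<lambda>u. g' (2*pi*u))"
  define L1 where "L1 = (\<lambda>u. of_real \<eta> * g' (2*pi*u))"
  define L2 where "L2 = (\<lambda>u. g (2*pi*u + \<eta>) - g (2*pi*u))"
  have pL0: "path L0" unfolding L0_def path_def
    by (intro continuous_on_compose2[OF g'cont] continuous_intros) auto
  have pL1: "path L1" unfolding L1_def path_def
    by (intro continuous_on_compose2[OF g'cont] continuous_intros) auto
  have pL2: "path L2" unfolding L2_def path_def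
    by (intro continuous_on_compose2[OF gcont] continuous_intros) auto
  have cL0: "pathfinish L0 = pathstart L0"
    using per'[of 0] by (simp add: L0_def pathfinish_def pathstart_def)
  have cL1: "pathfinish L1 = pathstart L1"
    using per'[of 0] by (simp add: L1_def pathfinish_def pathstart_def)
  have cL2: "pathfinish L2 = pathstart L2"
    using per[of 0] per[of \<eta>] by (simp add: L2_def pathfinish_def pathstart_def add.commute)
  have "winding_number L0 0 = winding_number L1 0"
  proof (rule winding_number_loops_linear_eq[OF pL1 pL0 cL1 cL0])
    fix t :: real assume "t \<in> {0..1}"
    show "0 \<notin> closed_segment (L1 t) (L0 t)"
    proof (rule zero_notin_seg)
      have "L1 t - L0 t = (\<eta> - 1) *\<^sub>R L0 t" by (simp add: L1_def L0_def scaleR_conv_of_real algebra_simps)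
      then have "norm (L1 t - L0 t) = \<bar>\<eta> - 1\<bar> * norm (L0 t)" by simp
      then have "norm (L1 t - L0 t) = (1 - \<eta>) * norm (L0 t)" using \<eta> by simp
      also have "\<dots> < norm (L0 t)" using \<eta> nz by (simp add: L0_def)
      finally show "norm (L1 t - L0 t) < norm (L0 t)" .
    qed
  qed
  also have "\<dots> = winding_number L2 0"
  proof (rule winding_number_loops_linear_eq[OF pL2 pL1 cL2 cL1])
    fix t :: real assume t: "t \<in> {0..1}"
    show "0 \<notin> closed_segment (L2 t) (L1 t)"
    proof (rule zero_notin_seg)
      show "norm (L2 t - L1 t) < norm (L1 t)"
        using near[of \<eta> "2*pi*t"] \<eta> t by (simp add: L1_def L2_def algebra_simps)
    qed
  qed
  finally have wL: "winding_number L0 0 = winding_number L2 0" .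
  define l1 where "l1 = linepath (0::real, \<eta>) (2*pi, \<eta>)"
  define p1 where "p1 = linepath (0::real, \<eta>) (0, 2*pi - \<eta>)"
  define p2 where "p2 = linepath (0::real, 2*pi - \<eta>) (\<eta>, 2*pi - \<eta>)"
  define p3 where "p3 = linepath (\<eta>, 2*pi - \<eta>) (2*pi - \<eta>, \<eta>)"
  define p4 where "p4 = linepath (2*pi - \<eta>, \<eta>) (2*pi, \<eta>)"
  define l2 where "l2 = p1 +++ p2 +++ p3 +++ p4"
  have inS: "(a, \<eta>) \<in> S" "(a, 2*pi - \<eta>) \<in> S" for a
    using \<eta> \<eta>pi by (auto simp: S_def)
  have segS: "closed_segment x y \<subseteq> S" if "x \<in> S" "y \<in> S" for x y
    using closed_segment_subset[OF that convS] .
  have l1S: "path_image l1 \<subseteq> S" unfolding l1_def using segS inS by simp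
  have j: "path_image (p +++ q) \<subseteq> S" if "path_image p \<subseteq> S" "path_image q \<subseteq> S" for p q :: "real \<Rightarrow> real \<times> real"
    using path_image_join_subset[of p q] that by blast
  have l2S: "path_image l2 \<subseteq> S"
    unfolding l2_def p1_def p2_def p3_def p4_def
    by (intro j) (simp_all add: segS inS)
  have pl2: "path l2" unfolding l2_def p1_def p2_def p3_def p4_def by simp
  have "homotopic_paths S l1 l2"
  proof (rule homotopic_paths_linear)
    show "path l1" unfolding l1_def by simp
    show "path l2" by (rule pl2)
    show "pathstart l2 = pathstart l1" unfolding l1_def l2_def p1_def by simp
    show "pathfinish l2 = pathfinish l1" unfolding l1_def l2_def p4_def by simp
    fix t :: real assume "t \<in> {0..1}"
    then show "closed_segment (l1 t) (l2 t) \<subseteq> S"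
      using l1S l2S by (intro segS) (auto simp: path_image_def)
  qed
  then have "homotopic_paths (-{0}) (A \<circ> l1) (A \<circ> l2)"
    by (rule homotopic_paths_continuous_image) (use Acont AS in auto)
  then have hom: "winding_number (A \<circ> l1) 0 = winding_number (A \<circ> l2) 0"
    by (rule winding_number_homotopic_paths)
  have Al1: "A \<circ> l1 = L2"
    by (rule ext) (simp add: A_def l1_def L2_def linepath_def algebra_simps)
  have e1: "A \<circ> p1 = (\<lambda>u. g (\<eta> + u * (2*pi - 2*\<eta>)) - g 0)"
    by (rule ext) (simp add: A_def p1_def linepath_def algebra_simps)
  have e2: "A \<circ> p2 = (\<lambda>u. g (u * \<eta> - \<eta>) - g (u * \<eta>))"
  proof (rule ext)
    fix u
    have f: "fst (p2 u) = u * \<eta>" "snd (p2 u) = 2*pi - \<eta>"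
      by (simp_all add: p2_def linepath_def algebra_simps)
    have "u * \<eta> + (2*pi - \<eta>) = (u * \<eta> - \<eta>) + 2*pi" by simp
    then have "g (u * \<eta> + (2*pi - \<eta>)) = g (u * \<eta> - \<eta>)" by (simp only: per)
    then show "(A \<circ> p2) u = g (u * \<eta> - \<eta>) - g (u * \<eta>)"
      by (simp add: A_def f)
  qed
  have e3: "A \<circ> p3 = (\<lambda>u. g 0 - g (\<eta> + u * (2*pi - 2*\<eta>)))"
  proof (rule ext)
    fix u
    have "g ((1 - u) * \<eta> + u * (2 * pi - \<eta>) + ((1 - u) * (2 * pi - \<eta>) + u * \<eta>)) = g (0 + 2*pi)"
      by (simp add: algebra_simps)
    then show "(A \<circ> p3) u = g 0 - g (\<eta> + u * (2*pi - 2*\<eta>))"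
      using per[of 0] by (simp add: A_def p3_def linepath_def algebra_simps)
  qed
  have e4: "A \<circ> p4 = (\<lambda>u. g (u * \<eta>) - g (u * \<eta> - \<eta>))"
  proof (rule ext)
    fix u
    have f: "fst (p4 u) = (u * \<eta> - \<eta>) + 2*pi" "snd (p4 u) = \<eta>"
      by (simp_all add: p4_def linepath_def algebra_simps)
    have "(u * \<eta> - \<eta>) + 2*pi + \<eta> = u * \<eta> + 2*pi" by simp
    then have "g ((u * \<eta> - \<eta>) + 2*pi + \<eta>) = g (u * \<eta>)" by (simp only: per)
    moreover have "g ((u * \<eta> - \<eta>) + 2*pi) = g (u * \<eta> - \<eta>)" by (simp only: per)
    ultimately show "(A \<circ> p4) u = g (u * \<eta>) - g (u * \<eta> - \<eta>)"
      by (simp only: A_def f o_def)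
  qed
  have r1: "-\<i> * (g (\<eta> + u * (2*pi - 2*\<eta>)) - g 0) \<notin> \<real>\<^sub>\<le>\<^sub>0" if "u \<in> {0..1}" for u
  proof -
    define h where "h = \<eta> + u * (2*pi - 2*\<eta>)"
    have c: "0 \<le> 2*pi - 2*\<eta>" using \<eta>pi by linarith
    have "u * (2*pi - 2*\<eta>) \<le> 2*pi - 2*\<eta>" using mult_left_le_one_le[OF c] that by auto
    moreover have "0 \<le> u * (2*pi - 2*\<eta>)" using c that by simp
    ultimately have "0 < h" "h < 2*pi" using \<eta> unfolding h_def by linarith+
    then have "g h - g 0 \<noteq> 0" using g_ne0 by auto
    moreover have "Im (g h - g 0) \<ge> 0" using low[of h] by simp
    ultimately show ?thesis unfolding h_def[symmetric]
      by (auto simp: complex_nonpos_Reals_iff complex_eq_iff)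
  qed
  have r2: "-1 * (g (u * \<eta> - \<eta>) - g (u * \<eta>)) \<notin> \<real>\<^sub>\<le>\<^sub>0" if "u \<in> {0..1}" for u
  proof -
    have "Re (g (u * \<eta> - \<eta>)) < Re (g (u * \<eta>))"
      using that \<eta> by (intro incr) (auto simp: mult_left_le_one_le)
    then show ?thesis by (auto simp: complex_nonpos_Reals_iff)
  qed
  have r3: "\<i> * (g 0 - g (\<eta> + u * (2*pi - 2*\<eta>))) \<notin> \<real>\<^sub>\<le>\<^sub>0" if "u \<in> {0..1}" for u
  proof -
    define h where "h = \<eta> + u * (2*pi - 2*\<eta>)"
    have c: "0 \<le> 2*pi - 2*\<eta>" using \<eta>pi by linarith
    have "u * (2*pi - 2*\<eta>) \<le> 2*pi - 2*\<eta>" using mult_left_le_one_le[OF c] that by auto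
    moreover have "0 \<le> u * (2*pi - 2*\<eta>)" using c that by simp
    ultimately have "0 < h" "h < 2*pi" using \<eta> unfolding h_def by linarith+
    then have "g 0 - g h \<noteq> 0" using g_ne0[of h] by (metis right_minus_eq)
    moreover have "Im (g 0 - g h) \<le> 0" using low[of h] by simp
    ultimately show ?thesis unfolding h_def[symmetric]
      by (auto simp: complex_nonpos_Reals_iff complex_eq_iff)
  qed
  have r4: "1 * (g (u * \<eta>) - g (u * \<eta> - \<eta>)) \<notin> \<real>\<^sub>\<le>\<^sub>0" if "u \<in> {0..1}" for u
  proof -
    have "Re (g (u * \<eta> - \<eta>)) < Re (g (u * \<eta>))"
      using that \<eta> by (intro incr) (auto simp: mult_left_le_one_le)
    then show ?thesis by (auto simp: complex_nonpos_Reals_iff)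
  qed
  have pp: "path (A \<circ> p)" if "path p" for p
    using that by (intro path_continuous_image Acont)
  have P1: "path (A \<circ> p1)" "0 \<notin> path_image (A \<circ> p1)"
     apply (rule pp) apply (simp add: p1_def)
    unfolding e1 by (rule ray_nz[of "-\<i>"]) (rule r1)
  have P2: "path (A \<circ> p2)" "0 \<notin> path_image (A \<circ> p2)"
     apply (rule pp) apply (simp add: p2_def)
    unfolding e2 by (rule ray_nz[of "-1"]) (rule r2)
  have P3: "path (A \<circ> p3)" "0 \<notin> path_image (A \<circ> p3)"
     apply (rule pp) apply (simp add: p3_def)
    unfolding e3 by (rule ray_nz[of "\<i>"]) (rule r3)
  have P4: "path (A \<circ> p4)" "0 \<notin> path_image (A \<circ> p4)"
     apply (rule pp) apply (simp add: p4_def)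
    unfolding e4 by (rule ray_nz[of "1"]) (rule r4)
  define X0 where "X0 = g \<eta> - g 0"
  define X1 where "X1 = g (-\<eta>) - g 0"
  have gm: "g (2*pi - \<eta>) = g (-\<eta>)" "g (pi * 2 - \<eta>) = g (-\<eta>)" using per[of "-\<eta>"] by (simp_all add: mult.commute)
  have ReX0: "Re X0 > 0" using incr[of 0 \<eta>] \<eta> by (simp add: X0_def)
  have ReX1: "Re (-X1) > 0" using incr[of "-\<eta>" 0] \<eta> by (simp add: X1_def)
  have W1: "winding_number (A \<circ> p1) 0 = (Ln (-\<i> * X1) - Ln (-\<i> * X0)) / (2 * of_real pi * \<i>)"
    unfolding e1 using ray_winding[of "\<lambda>u. g (\<eta> + u * (2*pi - 2*\<eta>)) - g 0" "-\<i>"] r1 P1(1) e1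
    by (simp add: X0_def X1_def gm algebra_simps)
  have W2: "winding_number (A \<circ> p2) 0 = (Ln (-1 * (-X0)) - Ln (-1 * X1)) / (2 * of_real pi * \<i>)"
    unfolding e2 using ray_winding[of "\<lambda>u. g (u * \<eta> - \<eta>) - g (u * \<eta>)" "-1"] r2 P2(1) e2
    by (simp add: X0_def X1_def)
  have W3: "winding_number (A \<circ> p3) 0 = (Ln (\<i> * (-X1)) - Ln (\<i> * (-X0))) / (2 * of_real pi * \<i>)"
    unfolding e3 using ray_winding[of "\<lambda>u. g 0 - g (\<eta> + u * (2*pi - 2*\<eta>))" "\<i>"] r3 P3(1) e3
    by (simp add: X0_def X1_def gm algebra_simps)
  have W4: "winding_number (A \<circ> p4) 0 = (Ln (1 * X0) - Ln (1 * (-X1))) / (2 * of_real pi * \<i>)"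
    unfolding e4 using ray_winding[of "\<lambda>u. g (u * \<eta>) - g (u * \<eta> - \<eta>)" "1"] r4 P4(1) e4
    by (simp add: X0_def X1_def)
  have fin: "pathfinish (A \<circ> p1) = pathstart (A \<circ> p2)" "pathfinish (A \<circ> p2) = pathstart (A \<circ> p3)"
    "pathfinish (A \<circ> p3) = pathstart (A \<circ> p4)"
    by (simp_all add: pathfinish_compose pathstart_compose p1_def p2_def p3_def p4_def)
  have "winding_number (A \<circ> l2) 0 = winding_number ((A \<circ> p1) +++ (A \<circ> p2) +++ (A \<circ> p3) +++ (A \<circ> p4)) 0"
    unfolding l2_def path_compose_join ..
  also have "\<dots> = winding_number (A \<circ> p1) 0 + winding_number (A \<circ> p2) 0
      + winding_number (A \<circ> p3) 0 + winding_number (A \<circ> p4) 0"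
    using P1 P2 P3 P4 fin
    by (simp add: winding_number_join join_path_image)
  also have "\<dots> = 1"
  proof -
    have a: "Ln (-\<i> * X1) = Ln (-X1) + \<i> * of_real pi / 2"
      using Ln_ii_pos[OF ReX1] by simp
    have b: "Ln (\<i> * (-X1)) = Ln (-X1) + \<i> * of_real pi / 2"
      using Ln_ii_pos[OF ReX1] by simp
    have c: "Ln (-\<i> * X0) = Ln X0 - \<i> * of_real pi / 2"
      using Ln_mii_pos[OF ReX0] by simp
    have d: "Ln (\<i> * (-X0)) = Ln X0 - \<i> * of_real pi / 2"
      using Ln_mii_pos[OF ReX0] by simp
    show ?thesis unfolding W1 W2 W3 W4 a b c d
      by (simp add: field_simps)
  qed
  finally have "winding_number (A \<circ> l2) 0 = 1" .
  then show ?thesis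
    using hom Al1 wL by (simp add: L0_def)
qed

end


context hopf
begin

lemma hopf_neg:
  assumes aneg: "Re (g' 0) < 0"
  shows "\<exists>z. z \<notin> path_image (\<lambda>u. g (2*pi*u)) \<and> winding_number (\<lambda>u. g (2*pi*u)) z = -1"
proof -
  obtain \<delta>1 where \<delta>1: "\<delta>1 > 0" "\<And>s t. -\<delta>1 \<le> s \<Longrightarrow> s < t \<Longrightarrow> t \<le> \<delta>1 \<Longrightarrow> Re (g s) > Re (g t)"
    using decr_nbhd[OF aneg] by blast
  define \<delta> where "\<delta> = min \<delta>1 (1/2)"
  have \<delta>: "0 < \<delta>" "\<delta> \<le> \<delta>1" "\<delta> \<le> 1/2" using \<delta>1 by (auto simp: \<delta>_def)
  have \<delta>pi: "\<delta> < pi" using \<delta>(3) pi_gt3 by linarith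
  have decr: "Re (g s) > Re (g t)" if "-\<delta> \<le> s" "s < t" "t \<le> \<delta>" for s t
    using \<delta>1(2)[of s t] that \<delta>(2) by linarith
  have "\<exists>x\<in>{\<delta>..2*pi-\<delta>}. \<forall>y\<in>{\<delta>..2*pi-\<delta>}. norm (g x - g 0) \<le> norm (g y - g 0)"
    using \<delta>pi by (intro continuous_attains_inf) (auto intro!: continuous_intros gcont)
  then obtain t0 where t0: "t0 \<in> {\<delta>..2*pi-\<delta>}" "\<And>y. y \<in> {\<delta>..2*pi-\<delta>} \<Longrightarrow> norm (g t0 - g 0) \<le> norm (g y - g 0)"
    by blast
  define \<mu> where "\<mu> = norm (g t0 - g 0)"
  have "g t0 \<noteq> g 0" using t0(1) \<delta> by (intro g_ne0) auto
  then have \<mu>: "\<mu> > 0" by (simp add: \<mu>_def)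
  define \<epsilon> where "\<epsilon> = \<mu> / 2"
  have \<epsilon>: "0 < \<epsilon>" "\<epsilon> < \<mu>" using \<mu> by (auto simp: \<epsilon>_def)
  define z where "z = g 0 + \<i> * of_real \<epsilon>"
  define G where "G = (\<lambda>t. g t - z)"
  have s1: "\<i> * G t \<notin> \<real>\<^sub>\<le>\<^sub>0" if "-\<delta> \<le> t" "t \<le> 0" for t
  proof (cases "t = 0")
    case True
    then show ?thesis using \<epsilon> by (simp add: G_def z_def complex_nonpos_Reals_iff)
  next
    case False
    then have "Re (g t) > Re (g 0)" using that by (intro decr) auto
    then show ?thesis by (simp add: G_def z_def complex_nonpos_Reals_iff)
  qed
  have s1': "\<i> * G t \<notin> \<real>\<^sub>\<le>\<^sub>0" if "0 \<le> t" "t \<le> \<delta>" for t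
  proof (cases "t = 0")
    case True
    then show ?thesis using \<epsilon> by (simp add: G_def z_def complex_nonpos_Reals_iff)
  next
    case False
    then have "Re (g t) < Re (g 0)" using that by (intro decr) auto
    then show ?thesis by (simp add: G_def z_def complex_nonpos_Reals_iff)
  qed
  have s2: "-\<i> * G t \<notin> \<real>\<^sub>\<le>\<^sub>0" if "\<delta> \<le> t" "t \<le> 2*pi - \<delta>" for t
  proof
    assume "-\<i> * G t \<in> \<real>\<^sub>\<le>\<^sub>0"
    then have re: "Re (g t - g 0) = 0" and im: "Im (g t - g 0) \<le> \<epsilon>"
      by (auto simp: G_def z_def complex_nonpos_Reals_iff)
    have "Im (g t - g 0) \<ge> 0" using low[of t] by simp
    then have "norm (g t - g 0) \<le> \<epsilon>" using re im by (simp add: cmod_eq_Im)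
    moreover have "\<mu> \<le> norm (g t - g 0)" using t0(2)[of t] that by (simp add: \<mu>_def)
    ultimately show False using \<epsilon> by linarith
  qed
  have Gper: "G (t + 2*pi) = G t" for t by (simp add: G_def per)
  have Gnz: "G t \<noteq> 0" if "t \<in> {0..2*pi}" for t
  proof -
    have "t \<le> \<delta> \<or> (\<delta> \<le> t \<and> t \<le> 2*pi - \<delta>) \<or> 2*pi - \<delta> \<le> t" by linarith
    then show ?thesis
    proof (elim disjE conjE)
      assume "t \<le> \<delta>" then show ?thesis using s1'[of t] that by auto
    next
      assume "\<delta> \<le> t" "t \<le> 2*pi - \<delta>" then show ?thesis using s2[of t] by auto
    next
      assume "2*pi - \<delta> \<le> t"
      then have "\<i> * G (t - 2*pi) \<notin> \<real>\<^sub>\<le>\<^sub>0" using s1[of "t - 2*pi"] that by auto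
      moreover have "G (t - 2*pi) = G t" using Gper[of "t - 2*pi"] by simp
      ultimately show ?thesis by auto
    qed
  qed
  have Gcont: "continuous_on T G" for T unfolding G_def by (intro continuous_intros gcont)
  define l where "l = linepath (0::real) (2*pi)"
  define q1 where "q1 = linepath (0::real) \<delta>"
  define q2 where "q2 = linepath \<delta> (2*pi - \<delta>)"
  define q3 where "q3 = linepath (2*pi - \<delta>) (2*pi)"
  define T where "T = {0..2*pi}"
  have convT: "convex T" by (simp add: T_def)
  have segT: "closed_segment x y \<subseteq> T" if "x \<in> T" "y \<in> T" for x y
    using closed_segment_subset[OF that convT] .
  have inT: "0 \<in> T" "\<delta> \<in> T" "2*pi - \<delta> \<in> T" "2*pi \<in> T" using \<delta> \<delta>pi by (auto simp: T_def)
  have j: "path_image (p +++ q) \<subseteq> T" if "path_image p \<subseteq> T" "path_image q \<subseteq> T" for p q :: "real \<Rightarrow> real"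
    using path_image_join_subset[of p q] that by blast
  have lT: "path_image l \<subseteq> T" unfolding l_def using segT inT by simp
  have l2T: "path_image (q1 +++ q2 +++ q3) \<subseteq> T"
    unfolding q1_def q2_def q3_def by (intro j) (simp_all add: segT inT)
  have "homotopic_paths T l (q1 +++ q2 +++ q3)"
  proof (rule homotopic_paths_linear)
    show "path l" unfolding l_def by simp
    show "path (q1 +++ q2 +++ q3)" unfolding q1_def q2_def q3_def by simp
    show "pathstart (q1 +++ q2 +++ q3) = pathstart l" unfolding l_def q1_def by simp
    show "pathfinish (q1 +++ q2 +++ q3) = pathfinish l" unfolding l_def q3_def by simp
    fix t :: real assume "t \<in> {0..1}"
    then show "closed_segment (l t) ((q1 +++ q2 +++ q3) t) \<subseteq> T"
      using lT l2T by (intro segT) (auto simp: path_image_def)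
  qed
  then have "homotopic_paths (-{0}) (G \<circ> l) (G \<circ> (q1 +++ q2 +++ q3))"
    by (rule homotopic_paths_continuous_image) (use Gcont Gnz in \<open>auto simp: T_def\<close>)
  then have hom: "winding_number (G \<circ> l) 0 = winding_number (G \<circ> (q1 +++ q2 +++ q3)) 0"
    by (rule winding_number_homotopic_paths)
  have e1: "G \<circ> q1 = (\<lambda>u. G (u * \<delta>))"
    by (rule ext) (simp add: q1_def linepath_def algebra_simps)
  have e2: "G \<circ> q2 = (\<lambda>u. G (\<delta> + u * (2*pi - 2*\<delta>)))"
    by (rule ext) (simp add: q2_def linepath_def algebra_simps)
  have e3: "G \<circ> q3 = (\<lambda>u. G (u * \<delta> - \<delta>))"
  proof (rule ext)
    fix u
    have "q3 u = (u * \<delta> - \<delta>) + 2*pi" by (simp add: q3_def linepath_def algebra_simps)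
    then show "(G \<circ> q3) u = G (u * \<delta> - \<delta>)" by (simp add: Gper)
  qed
  have ud: "0 \<le> u * \<delta>" "u * \<delta> \<le> \<delta>" if "u \<in> {0..1}" for u
    using that \<delta> by (auto simp: mult_left_le_one_le)
  have r1: "\<i> * G (u * \<delta>) \<notin> \<real>\<^sub>\<le>\<^sub>0" if "u \<in> {0..1}" for u
    using s1' ud[OF that] by auto
  have r3: "\<i> * G (u * \<delta> - \<delta>) \<notin> \<real>\<^sub>\<le>\<^sub>0" if "u \<in> {0..1}" for u
    using s1 ud[OF that] by auto
  have r2: "-\<i> * G (\<delta> + u * (2*pi - 2*\<delta>)) \<notin> \<real>\<^sub>\<le>\<^sub>0" if "u \<in> {0..1}" for u
  proof -
    have c: "0 \<le> 2*pi - 2*\<delta>" using \<delta>pi by linarith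
    have "u * (2*pi - 2*\<delta>) \<le> 2*pi - 2*\<delta>" using mult_left_le_one_le[OF c] that by auto
    moreover have "0 \<le> u * (2*pi - 2*\<delta>)" using c that by simp
    ultimately show ?thesis using s2 by auto
  qed
  have pp: "path (G \<circ> p)" if "path p" for p
    using that by (intro path_continuous_image Gcont)
  have P1: "path (G \<circ> q1)" "0 \<notin> path_image (G \<circ> q1)"
     apply (rule pp) apply (simp add: q1_def)
    unfolding e1 by (rule ray_nz[of "\<i>"]) (rule r1)
  have P2: "path (G \<circ> q2)" "0 \<notin> path_image (G \<circ> q2)"
     apply (rule pp) apply (simp add: q2_def)
    unfolding e2 by (rule ray_nz[of "-\<i>"]) (rule r2)
  have P3: "path (G \<circ> q3)" "0 \<notin> path_image (G \<circ> q3)"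
     apply (rule pp) apply (simp add: q3_def)
    unfolding e3 by (rule ray_nz[of "\<i>"]) (rule r3)
  have W1: "winding_number (G \<circ> q1) 0 = (Ln (\<i> * G \<delta>) - Ln (\<i> * G 0)) / (2 * of_real pi * \<i>)"
    using ray_winding[of "\<lambda>u. G (u * \<delta>)" "\<i>"] r1 P1(1) unfolding e1 by simp
  have W2: "winding_number (G \<circ> q2) 0 = (Ln (-\<i> * G (-\<delta>)) - Ln (-\<i> * G \<delta>)) / (2 * of_real pi * \<i>)"
  proof -
    have "G (\<delta> + 1 * (2*pi - 2*\<delta>)) = G (-\<delta>)" using Gper[of "-\<delta>"] by simp
    then show ?thesis
      using ray_winding[of "\<lambda>u. G (\<delta> + u * (2*pi - 2*\<delta>))" "-\<i>"] r2 P2(1) unfolding e2 by simp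
  qed
  have W3: "winding_number (G \<circ> q3) 0 = (Ln (\<i> * G 0) - Ln (\<i> * G (-\<delta>))) / (2 * of_real pi * \<i>)"
    using ray_winding[of "\<lambda>u. G (u * \<delta> - \<delta>)" "\<i>"] r3 P3(1) unfolding e3 by simp
  have fin: "pathfinish (G \<circ> q1) = pathstart (G \<circ> q2)" "pathfinish (G \<circ> q2) = pathstart (G \<circ> q3)"
    by (simp_all add: pathfinish_compose pathstart_compose q1_def q2_def q3_def)
  have "winding_number (G \<circ> (q1 +++ q2 +++ q3)) 0
      = winding_number (G \<circ> q1) 0 + winding_number (G \<circ> q2) 0 + winding_number (G \<circ> q3) 0"
    unfolding path_compose_join using P1 P2 P3 fin
    by (simp add: winding_number_join join_path_image)
  also have "\<dots> = -1"
  proof -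
    have ReA: "Re (- G \<delta>) > 0" using decr[of 0 \<delta>] \<delta> by (simp add: G_def z_def)
    have ReB: "Re (G (-\<delta>)) > 0" using decr[of "-\<delta>" 0] \<delta> by (simp add: G_def z_def)
    have a: "Ln (\<i> * G \<delta>) = Ln (- G \<delta>) - \<i> * of_real pi / 2"
      using Ln_mii_pos[OF ReA] by simp
    have b: "Ln (-\<i> * G \<delta>) = Ln (- G \<delta>) + \<i> * of_real pi / 2"
      using Ln_ii_pos[OF ReA] by simp
    have c: "Ln (-\<i> * G (-\<delta>)) = Ln (G (-\<delta>)) - \<i> * of_real pi / 2"
      using Ln_mii_pos[OF ReB] by simp
    have d: "Ln (\<i> * G (-\<delta>)) = Ln (G (-\<delta>)) + \<i> * of_real pi / 2"
      using Ln_ii_pos[OF ReB] by simp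
    show ?thesis unfolding W1 W2 W3 a b c d by (simp add: field_simps)
  qed
  finally have wm: "winding_number (G \<circ> l) 0 = -1" using hom by simp
  have zim: "z \<notin> path_image (\<lambda>u. g (2*pi*u))"
  proof
    assume "z \<in> path_image (\<lambda>u. g (2*pi*u))"
    then obtain u where "u \<in> {0..1}" "g (2*pi*u) = z" by (auto simp: path_image_def)
    then show False using Gnz[of "2*pi*u"] by (auto simp: G_def)
  qed
  have "winding_number (\<lambda>u. g (2*pi*u)) z = winding_number (\<lambda>u. g (2*pi*u) - z) 0"
    by (rule winding_number_offset)
  also have "\<dots> = winding_number (G \<circ> l) 0"
    by (rule winding_number_cong) (simp add: G_def l_def linepath_def mult.commute)
  finally show ?thesis using wm zim by auto
qed

end


lemma alg_identity:
  fixes r r1 r2 f1 f2 :: real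
  assumes r: "r > 0" and S: "r1^2 + (r * f1)^2 > 0"
  defines "v \<equiv> r1 / r" and "dv \<equiv> (r2 * r - r1^2) / r^2"
  shows "(f2 * v - f1 * dv + 2 * f1 * (v^2 + f1^2)) / (v^2 + f1^2)
       = Im (Complex (r2 - r * f1 * f1) (r1 * f1 + r * f2 + r1 * f1) / Complex r1 (r * f1)) + f1"
proof -
  define Sm where "Sm = r1^2 + (r * f1)^2"
  have Sm: "Sm > 0" using S by (simp add: Sm_def)
  have Q: "v^2 + f1^2 = Sm / r^2" using r unfolding v_def Sm_def by (simp add: field_simps power2_eq_square)
  have Qp: "Sm / r^2 > 0" using Sm r by simp
  have X: "f2 * v - f1 * dv = (r * r1 * f2 - f1 * (r2 * r - r1^2)) / r^2"
    using r unfolding v_def dv_def by (simp add: field_simps power2_eq_square)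
  have L: "(f2 * v - f1 * dv + 2 * f1 * (v^2 + f1^2)) / (v^2 + f1^2)
      = (r * r1 * f2 - f1 * (r2 * r - r1^2)) / Sm + 2 * f1"
    unfolding Q X using Qp r Sm by (simp add: field_simps)
  have I: "Im (Complex (r2 - r * f1 * f1) (r1 * f1 + r * f2 + r1 * f1) / Complex r1 (r * f1))
      = ((r1 * f1 + r * f2 + r1 * f1) * r1 - (r2 - r * f1 * f1) * (r * f1)) / Sm"
    by (simp add: Im_divide Sm_def power2_eq_square)
  have "(r * r1 * f2 - f1 * (r2 * r - r1^2)) / Sm + 2 * f1
      - (((r1 * f1 + r * f2 + r1 * f1) * r1 - (r2 - r * f1 * f1) * (r * f1)) / Sm + f1)
      = (- f1 * Sm) / Sm + f1"
    unfolding Sm_def by (simp add: diff_divide_distrib[symmetric] add_divide_distrib power2_eq_square algebra_simps)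
  also have "\<dots> = 0" using Sm by simp
  finally have D: "(r * r1 * f2 - f1 * (r2 * r - r1^2)) / Sm + 2 * f1
      - (((r1 * f1 + r * f2 + r1 * f1) * r1 - (r2 - r * f1 * f1) * (r * f1)) / Sm + f1) = 0" .
  show ?thesis unfolding L I using D by (subst eq_iff_diff_eq_0)
qed


lemma lift_exists:
  fixes F F' :: "real \<Rightarrow> complex"
  assumes ab: "a \<le> b"
    and der: "\<And>t. t \<in> {a..b} \<Longrightarrow> (F has_vector_derivative F' t) (at t within {a..b})"
    and cont: "continuous_on {a..b} F'"
    and nz: "\<And>t. t \<in> {a..b} \<Longrightarrow> F t \<noteq> 0"
  obtains \<Lambda> where "\<And>t. t \<in> {a..b} \<Longrightarrow> (\<Lambda> has_vector_derivative F' t / F t) (at t within {a..b})"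
    "\<And>t. t \<in> {a..b} \<Longrightarrow> exp (\<Lambda> t) = F t"
proof -
  have Fc: "continuous_on {a..b} F"
    using der by (meson continuous_on_eq_continuous_within has_vector_derivative_continuous)
  define h where "h t = F' t / F t" for t
  have hc: "continuous_on {a..b} h"
    unfolding h_def using Fc cont nz by (intro continuous_intros) auto
  define \<Lambda> where "\<Lambda> t = Ln (F a) + integral {a..t} h" for t
  have d\<Lambda>: "(\<Lambda> has_vector_derivative h t) (at t within {a..b})" if "t \<in> {a..b}" for t
    using has_vector_derivative_add[OF has_vector_derivative_const integral_has_vector_derivative[OF hc that]]
    unfolding \<Lambda>_def by simp
  define D where "D t = F t * exp (- \<Lambda> t)" for t
  have dD: "(D has_derivative (\<lambda>h. 0)) (at t within {a..b})" if t: "t \<in> {a..b}" for t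
  proof -
    have e: "((\<lambda>t. exp (- \<Lambda> t)) has_vector_derivative (- h t) * exp (- \<Lambda> t)) (at t within {a..b})"
    proof -
      have "((\<lambda>t. - \<Lambda> t) has_vector_derivative - h t) (at t within {a..b})"
        using d\<Lambda>[OF t] by (rule has_vector_derivative_minus)
      from field_vector_diff_chain_within[OF this, of exp "exp (- \<Lambda> t)"]
      show ?thesis by (simp add: o_def DERIV_exp has_field_derivative_at_within)
    qed
    have "(D has_vector_derivative (F t * ((- h t) * exp (- \<Lambda> t)) + F' t * exp (- \<Lambda> t))) (at t within {a..b})"
      unfolding D_def by (rule has_vector_derivative_mult[OF der[OF t] e])
    moreover have "F t * ((- h t) * exp (- \<Lambda> t)) + F' t * exp (- \<Lambda> t) = 0"
      using nz[OF t] by (simp add: h_def field_simps)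
    ultimately have "(D has_vector_derivative 0) (at t within {a..b})" by simp
    then show ?thesis by (simp add: has_vector_derivative_def)
  qed
  obtain C where C: "\<And>t. t \<in> {a..b} \<Longrightarrow> D t = C"
    using has_derivative_zero_constant[of "{a..b}" D] dD by auto
  have "D a = 1" using nz[of a] ab by (simp add: D_def \<Lambda>_def exp_minus exp_Ln)
  then have D1: "D t = 1" if "t \<in> {a..b}" for t using C[OF that] C[of a] ab by simp
  show ?thesis
  proof
    fix t assume t: "t \<in> {a..b}"
    show "(\<Lambda> has_vector_derivative F' t / F t) (at t within {a..b})"
      using d\<Lambda>[OF t] by (simp add: h_def)
    have "F t * exp (- \<Lambda> t) = 1" using D1[OF t] by (simp add: D_def)
    then show "exp (\<Lambda> t) = F t" by (simp add: exp_minus field_simps)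
  qed
qed

lemma hvd_exp_i:
  assumes "(f has_real_derivative f1) (at x)"
  shows "((\<lambda>x. exp (\<i> * complex_of_real (f x))) has_vector_derivative
           (\<i> * complex_of_real f1 * exp (\<i> * complex_of_real (f x)))) (at x)"
proof -
  have "((\<lambda>x. \<i> * complex_of_real (f x)) has_vector_derivative \<i> * complex_of_real f1) (at x)"
    using has_vector_derivative_mult_right[OF has_vector_derivative_of_real[OF assms], of \<i>] .
  from field_vector_diff_chain_at[OF this, of exp "exp (\<i> * complex_of_real (f x))"]
  show ?thesis by (simp add: o_def DERIV_exp)
qed

lemma hvd_polar:
  assumes a: "(a has_real_derivative a') (at x)" and b: "(b has_real_derivative b') (at x)"
    and f: "(f has_real_derivative f1) (at x)"
  shows "((\<lambda>x. (complex_of_real (a x) + \<i> * complex_of_real (b x)) * exp (\<i> * complex_of_real (f x)))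
     has_vector_derivative
     ((complex_of_real (a' - b x * f1) + \<i> * complex_of_real (b' + a x * f1)) * exp (\<i> * complex_of_real (f x)))) (at x)"
proof -
  have ab: "((\<lambda>x. complex_of_real (a x) + \<i> * complex_of_real (b x)) has_vector_derivative
      (complex_of_real a' + \<i> * complex_of_real b')) (at x)"
    by (intro has_vector_derivative_add has_vector_derivative_of_real a
        has_vector_derivative_mult_right b)
  from has_vector_derivative_mult[OF ab hvd_exp_i[OF f]]
  show ?thesis by (simp add: algebra_simps)
qed

lemma deriv_per:
  fixes F :: "real \<Rightarrow> real"
  assumes "\<And>x. F (x + p) = F x + C" "\<And>x. F differentiable (at x)"
  shows "deriv F (x + p) = deriv F x"
proof -
  have d1: "(F has_real_derivative deriv F (x + p)) (at (x + p))"
    using assms(2) DERIV_deriv_iff_real_differentiable by blast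
  then have "((\<lambda>y. F (y + p)) has_real_derivative deriv F (x + p)) (at x)"
    by (simp add: DERIV_shift)
  then have "((\<lambda>y. F y + C) has_real_derivative deriv F (x + p)) (at x)"
    using assms(1) by simp
  moreover have "((\<lambda>y. F y + C) has_real_derivative deriv F x) (at x)"
  proof -
    have "(F has_real_derivative deriv F x) (at x)"
      using assms(2) DERIV_deriv_iff_real_differentiable by blast
    from DERIV_add[OF this DERIV_const[of C]] show ?thesis by simp
  qed
  ultimately show ?thesis by (rule DERIV_unique)
qed


context hopf
begin
lemma hopf_main:
  assumes orient: "\<And>z. z \<notin> path_image (\<lambda>u. g (2*pi*u)) \<Longrightarrow> winding_number (\<lambda>u. g (2*pi*u)) z \<noteq> -1"
  shows "winding_number (\<lambda>u. g' (2*pi*u)) 0 = 1"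
proof (cases "Re (g' 0) > 0")
  case True
  then show ?thesis by (rule hopf_pos)
next
  case False
  then have "Re (g' 0) < 0" using Re_g'0 by linarith
  then show ?thesis using hopf_neg orient by blast
qed
end

lemma smooth_facts:
  assumes "smooth_fun h"
  shows "\<And>x. (h has_real_derivative deriv h x) (at x)"
    "\<And>x. (deriv h has_real_derivative deriv (deriv h) x) (at x)"
    "\<And>x. isCont (deriv (deriv h)) x"
proof -
  fix x
  have s: "\<And>n. (deriv ^^ n) h differentiable (at x)" using assms unfolding smooth_fun_def by blast
  show "(h has_real_derivative deriv h x) (at x)"
    using s[of 0] DERIV_deriv_iff_real_differentiable by simp
  show "(deriv h has_real_derivative deriv (deriv h) x) (at x)"
    using s[of 1] DERIV_deriv_iff_real_differentiable by simp
  show "isCont (deriv (deriv h)) x"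
    using s[of 2] differentiable_imp_continuous_within by (simp add: numeral_2_eq_2)
qed

lemma contUNIV: "(\<And>x. isCont h x) \<Longrightarrow> continuous_on UNIV h"
  by (simp add: continuous_at_imp_continuous_on)

theorem mainTheorem11:
  fixes \<rho> f :: "real \<Rightarrow> real" and k :: int and c :: real
  assumes rho_smooth: "smooth_fun \<rho>"
    and rho_pos: "\<And>\<beta>. \<rho> \<beta> > 0"
    and rho_per: "\<And>\<beta>. \<rho> (\<beta> + 2*pi) = \<rho> \<beta>"
    and f_smooth: "smooth_fun f"
    and f_per: "\<And>\<beta>. f (\<beta> + 2*pi) = f \<beta> + 2 * of_int k * pi"
    and regular: "\<And>\<beta>. vector_derivative (curve \<rho> f) (at \<beta>) \<noteq> 0"
    and simple: "inj_on (curve \<rho> f) {0..<2*pi}"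
    and ccw: "counterclockwise (curve_path \<rho> f)"
    and hstat: "ham_stationary (twisted_torus \<rho> f)"
    and c_nz: "c \<noteq> 0"
    and c_eq: "\<And>\<beta>. let v = (\<lambda>x. deriv \<rho> x / \<rho> x); w = deriv f in
        (deriv w \<beta> * v \<beta> - w \<beta> * deriv v \<beta> + 2 * w \<beta> * ((v \<beta>)\<^sup>2 + (w \<beta>)\<^sup>2))
          / ((v \<beta>)\<^sup>2 + (w \<beta>)\<^sup>2) powr (3/2) = c"
  shows "integral {0..2*pi} (\<lambda>\<beta>. sqrt ((deriv \<rho> \<beta> / \<rho> \<beta>)\<^sup>2 + (deriv f \<beta>)\<^sup>2))
           = 2 * (of_int k + 1) * pi / c"
proof -
  note rd = smooth_facts(1)[OF rho_smooth] and rdd = smooth_facts(2)[OF rho_smooth]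
    and rddc = smooth_facts(3)[OF rho_smooth]
  note fd = smooth_facts(1)[OF f_smooth] and fdd = smooth_facts(2)[OF f_smooth]
    and fddc = smooth_facts(3)[OF f_smooth]
  have c\<rho>: "continuous_on UNIV \<rho>" using rd by (intro contUNIV DERIV_isCont)
  have c\<rho>1: "continuous_on UNIV (deriv \<rho>)" using rdd by (intro contUNIV DERIV_isCont)
  have c\<rho>2: "continuous_on UNIV (deriv (deriv \<rho>))" using rddc by (intro contUNIV)
  have cf: "continuous_on UNIV f" using fd by (intro contUNIV DERIV_isCont)
  have cf1: "continuous_on UNIV (deriv f)" using fdd by (intro contUNIV DERIV_isCont)
  have cf2: "continuous_on UNIV (deriv (deriv f))" using fddc by (intro contUNIV)
  define E where "E \<beta> = exp (\<i> * complex_of_real (f \<beta>))" for \<beta>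
  define \<gamma> where "\<gamma> = curve \<rho> f"
  define \<gamma>' where "\<gamma>' \<beta> = (complex_of_real (deriv \<rho> \<beta>) + \<i> * complex_of_real (\<rho> \<beta> * deriv f \<beta>)) * E \<beta>" for \<beta>
  define \<gamma>'' where "\<gamma>'' \<beta> = (complex_of_real (deriv (deriv \<rho>) \<beta> - \<rho> \<beta> * deriv f \<beta> * deriv f \<beta>)
      + \<i> * complex_of_real (deriv \<rho> \<beta> * deriv f \<beta> + \<rho> \<beta> * deriv (deriv f) \<beta> + deriv \<rho> \<beta> * deriv f \<beta>)) * E \<beta>" for \<beta>
  have d\<gamma>: "(\<gamma> has_vector_derivative \<gamma>' \<beta>) (at \<beta>)" for \<beta>
  proof -
    have eq: "\<gamma> = (\<lambda>x. (complex_of_real (\<rho> x) + \<i> * complex_of_real ((\<lambda>x. 0) x)) * exp (\<i> * complex_of_real (f x)))"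
      by (simp add: \<gamma>_def curve_def fun_eq_iff)
    show ?thesis unfolding eq
      using hvd_polar[OF rd[of \<beta>] DERIV_const[of 0] fd[of \<beta>]] by (simp add: \<gamma>'_def E_def)
  qed
  have d\<gamma>': "(\<gamma>' has_vector_derivative \<gamma>'' \<beta>) (at \<beta>)" for \<beta>
  proof -
    have b: "((\<lambda>x. \<rho> x * deriv f x) has_real_derivative (deriv \<rho> \<beta> * deriv f \<beta> + \<rho> \<beta> * deriv (deriv f) \<beta>)) (at \<beta>)"
      using DERIV_mult[OF rd[of \<beta>] fdd[of \<beta>]] by (simp add: algebra_simps)
    show ?thesis
      using hvd_polar[OF rdd[of \<beta>] b fd[of \<beta>]]
      unfolding \<gamma>'_def[abs_def] \<gamma>''_def E_def by simp
  qed
  have c\<gamma>': "continuous_on UNIV \<gamma>'"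
    using d\<gamma>' by (meson continuous_at_imp_continuous_on has_vector_derivative_continuous)
  have c\<gamma>'': "continuous_on UNIV \<gamma>''"
    unfolding \<gamma>''_def E_def
    by (intro continuous_intros continuous_on_compose2[OF c\<rho>] c\<rho> c\<rho>1 c\<rho>2 cf cf1 cf2) auto
  have nz: "\<gamma>' \<beta> \<noteq> 0" for \<beta>
    using regular[of \<beta>] vector_derivative_at[OF d\<gamma>[of \<beta>]] by (simp add: \<gamma>_def)
  have Eper: "E (x + 2*pi) = E x" for x
  proof -
    have "\<i> * complex_of_real (f (x + 2*pi)) = \<i> * complex_of_real (f x) + \<i> * (of_int k * (of_real pi * 2))"
      unfolding f_per by (simp add: algebra_simps)
    then show ?thesis by (simp add: E_def)
  qed
  have r1per: "deriv \<rho> (x + 2*pi) = deriv \<rho> x" for x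
    using deriv_per[of \<rho> "2*pi" 0] rho_per rd real_differentiable_def by force
  have f1per: "deriv f (x + 2*pi) = deriv f x" for x
    using deriv_per[of f "2*pi" "2 * of_int k * pi"] f_per fd real_differentiable_def by force
  have \<gamma>per: "\<gamma> (x + 2*pi) = \<gamma> x" for x
    using Eper[of x] rho_per[of x] by (simp add: \<gamma>_def curve_def E_def[symmetric])
  have \<gamma>'per: "\<gamma>' (x + 2*pi) = \<gamma>' x" for x
    using Eper[of x] rho_per[of x] r1per[of x] f1per[of x] by (simp add: \<gamma>'_def)
  have pos2pi: "(0::real) < 2*pi" by simp
  have \<gamma>inj: "\<exists>n::int. s - t = 2*pi*n" if "\<gamma> s = \<gamma> t" for s t
  proof -
    obtain s' n1 where s': "0 \<le> s'" "s' < 0 + 2*pi" "\<gamma> s = \<gamma> s'" "s = s' + real_of_int n1 * (2*pi)"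
      using per_reduce[of \<gamma> "2*pi" 0 s] \<gamma>per by auto
    obtain t' n2 where t': "0 \<le> t'" "t' < 0 + 2*pi" "\<gamma> t = \<gamma> t'" "t = t' + real_of_int n2 * (2*pi)"
      using per_reduce[of \<gamma> "2*pi" 0 t] \<gamma>per by auto
    have "s' = t'" using simple s' t' that unfolding \<gamma>_def inj_on_def by auto
    then show ?thesis using s' t' by (intro exI[of _ "n1 - n2"]) (simp add: algebra_simps)
  qed
  have c\<gamma>: "continuous_on UNIV \<gamma>"
    using d\<gamma> by (meson continuous_at_imp_continuous_on has_vector_derivative_continuous)
  have "\<exists>x\<in>{0..2*pi}. \<forall>y\<in>{0..2*pi}. Im (\<gamma> x) \<le> Im (\<gamma> y)"
    by (intro continuous_attains_inf) (auto intro!: continuous_intros continuous_on_subset[OF c\<gamma>])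
  then obtain \<beta>0 where \<beta>0: "\<beta>0 \<in> {0..2*pi}" "\<And>y. y \<in> {0..2*pi} \<Longrightarrow> Im (\<gamma> \<beta>0) \<le> Im (\<gamma> y)"
    by blast
  have low: "Im (\<gamma> \<beta>0) \<le> Im (\<gamma> t)" for t
  proof -
    obtain y where "0 \<le> y" "y < 0 + 2*pi" "\<gamma> t = \<gamma> y"
      using per_reduce[of \<gamma> "2*pi" 0 t] \<gamma>per by auto
    then show ?thesis using \<beta>0(2)[of y] by simp
  qed
  define g where "g t = \<gamma> (\<beta>0 + t)" for t
  define g' where "g' t = \<gamma>' (\<beta>0 + t)" for t
  interpret H: hopf g g'
  proof
    fix t
    have "((\<lambda>t. \<beta>0 + t) has_vector_derivative 1) (at t)"
      by (intro derivative_eq_intros) auto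
    from vector_diff_chain_at[OF this d\<gamma>[of "\<beta>0 + t"]]
    show "(g has_vector_derivative g' t) (at t)" by (simp add: g_def[abs_def] g'_def o_def)
  next
    show "continuous_on UNIV g'" unfolding g'_def
      by (intro continuous_on_compose2[OF c\<gamma>'] continuous_intros) auto
  next
    fix t show "g (t + 2*pi) = g t" using \<gamma>per[of "\<beta>0 + t"] by (simp add: g_def add.assoc)
  next
    fix t show "g' (t + 2*pi) = g' t" using \<gamma>'per[of "\<beta>0 + t"] by (simp add: g'_def add.assoc)
  next
    fix t show "g' t \<noteq> 0" using nz by (simp add: g'_def)
  next
    fix s t assume "g s = g t"
    then obtain n :: int where "(\<beta>0 + s) - (\<beta>0 + t) = 2*pi*n" using \<gamma>inj unfolding g_def by blast
    then show "\<exists>n::int. s - t = 2*pi*n" by auto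
  next
    fix t show "Im (g 0) \<le> Im (g t)" using low by (simp add: g_def)
  qed
  define a where "a = \<beta>0 / (2*pi)"
  have a01: "a \<in> {0..1}" using \<beta>0(1) by (auto simp: a_def field_simps)
  have shift: "shiftpath a (\<lambda>u. F (2*pi*u)) u = F (\<beta>0 + 2*pi*u)"
    if Fper: "\<And>x. F (x + 2*pi) = F x" and u: "u \<in> {0..1}" for F :: "real \<Rightarrow> complex" and u
  proof (cases "a + u \<le> 1")
    case True
    then show ?thesis by (simp add: shiftpath_def a_def algebra_simps)
  next
    case False
    have "F (2*pi*(a + u - 1)) = F ((2*pi*(a + u - 1)) + 2*pi)" using Fper by simp
    also have "(2*pi*(a + u - 1)) + 2*pi = \<beta>0 + 2*pi*u" by (simp add: a_def algebra_simps)
    finally show ?thesis using False by (simp add: shiftpath_def)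
  qed
  define cp where "cp = curve_path \<rho> f"
  have cp_eq: "cp = (\<lambda>u. \<gamma> (2*pi*u))" by (simp add: cp_def curve_path_def \<gamma>_def fun_eq_iff)
  have pcp: "path cp" unfolding cp_eq path_def
    by (intro continuous_on_compose2[OF c\<gamma>] continuous_intros) auto
  have ccp: "pathfinish cp = pathstart cp" using \<gamma>per[of 0] by (simp add: cp_eq pathfinish_def pathstart_def)
  have imgs: "path_image (\<lambda>u. g (2*pi*u)) = path_image cp"
  proof -
    have "path_image (\<lambda>u. g (2*pi*u)) = path_image (shiftpath a cp)"
      unfolding path_image_def cp_eq using shift[where F=\<gamma>, OF \<gamma>per] by (auto simp: g_def)
    also have "\<dots> = path_image cp" using path_image_shiftpath[OF a01 ccp] .
    finally show ?thesis .
  qed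
  have orient: "winding_number (\<lambda>u. g (2*pi*u)) z \<noteq> -1" if z: "z \<notin> path_image (\<lambda>u. g (2*pi*u))" for z
  proof
    assume wm: "winding_number (\<lambda>u. g (2*pi*u)) z = -1"
    have zc: "z \<notin> path_image cp" using z imgs by simp
    have "winding_number (\<lambda>u. g (2*pi*u)) z = winding_number (shiftpath a cp) z"
      by (rule winding_number_cong) (use shift[where F=\<gamma>, OF \<gamma>per] in \<open>auto simp: g_def cp_eq\<close>)
    also have "\<dots> = winding_number cp z" by (rule winding_number_shiftpath[OF pcp zc ccp a01])
    finally have wcp: "winding_number cp z = -1" using wm by simp
    have "z \<notin> outside (path_image cp)"
      using winding_number_zero_in_outside[OF pcp ccp] wcp by force
    then have "z \<in> inside (path_image cp)" using zc inside_Un_outside by blast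
    then have "winding_number cp z = 1" using ccw unfolding counterclockwise_def cp_def by blast
    then show False using wcp by simp
  qed
  have Wg: "winding_number (\<lambda>u. g' (2*pi*u)) 0 = 1" using H.hopf_main orient by blast
  define tp where "tp = (\<lambda>u. \<gamma>' (2*pi*u))"
  have ptp: "path tp" unfolding tp_def path_def
    by (intro continuous_on_compose2[OF c\<gamma>'] continuous_intros) auto
  have ctp: "pathfinish tp = pathstart tp" using \<gamma>'per[of 0] by (simp add: tp_def pathfinish_def pathstart_def)
  have ztp: "0 \<notin> path_image tp" using nz by (auto simp: tp_def path_image_def)
  have W: "winding_number tp 0 = 1"
  proof -
    have "winding_number (\<lambda>u. g' (2*pi*u)) 0 = winding_number (shiftpath a tp) 0"
      by (rule winding_number_cong) (use shift[where F=\<gamma>', OF \<gamma>'per] in \<open>auto simp: g'_def tp_def\<close>)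
    also have "\<dots> = winding_number tp 0" by (rule winding_number_shiftpath[OF ptp ztp ctp a01])
    finally show ?thesis using Wg by simp
  qed
  obtain \<Theta> where \<Theta>d: "\<And>t. t \<in> {0..2*pi} \<Longrightarrow> (\<Theta> has_vector_derivative \<gamma>'' t / \<gamma>' t) (at t within {0..2*pi})"
    and \<Theta>e: "\<And>t. t \<in> {0..2*pi} \<Longrightarrow> exp (\<Theta> t) = \<gamma>' t"
    using lift_exists[of 0 "2*pi" \<gamma>' \<gamma>''] d\<gamma>' c\<gamma>'' nz
    by (auto intro: has_vector_derivative_at_within continuous_on_subset)
  have c\<Theta>: "continuous_on {0..2*pi} \<Theta>"
    using \<Theta>d by (meson continuous_on_eq_continuous_within has_vector_derivative_continuous)
  define p where "p = (\<lambda>u. \<Theta> (2*pi*u))"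
  have pp: "path p" unfolding p_def path_def
    by (intro continuous_on_compose2[OF c\<Theta>] continuous_intros) (auto simp: mult_le_cancel_left1)
  have "winding_number tp 0 = winding_number (exp \<circ> p) 0"
    by (rule winding_number_cong) (auto simp: tp_def p_def \<Theta>e mult_le_cancel_left1)
  also have "\<dots> = (\<Theta> (2*pi) - \<Theta> 0) / (2 * of_real pi * \<i>)"
    using winding_number_compose_exp[OF pp] by (simp add: p_def pathfinish_def pathstart_def)
  finally have T: "\<Theta> (2*pi) - \<Theta> 0 = 2 * of_real pi * \<i>" using W by (simp add: field_simps)
  have Imd: "Im (\<Theta> (2*pi)) - Im (\<Theta> 0) = 2*pi"
    using arg_cong[where f=Im, OF T] by simp
  define J where "J \<beta> = Im (\<gamma>'' \<beta> / \<gamma>' \<beta>) + deriv f \<beta>" for \<beta>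
  have FT: "(J has_integral (Im (\<Theta> (2*pi)) + f (2*pi) - (Im (\<Theta> 0) + f 0))) {0..2*pi}"
  proof (rule fundamental_theorem_of_calculus)
    show "0 \<le> 2*pi" by simp
    fix t assume t: "t \<in> {0..2*pi}"
    have "((\<lambda>t. Im (\<Theta> t)) has_vector_derivative Im (\<gamma>'' t / \<gamma>' t)) (at t within {0..2*pi})"
      using hvd_Im[OF \<Theta>d[OF t]] has_real_derivative_iff_has_vector_derivative by blast
    moreover have "(f has_vector_derivative deriv f t) (at t within {0..2*pi})"
      using fd[of t] has_real_derivative_iff_has_vector_derivative has_vector_derivative_at_within by blast
    ultimately show "((\<lambda>t. Im (\<Theta> t) + f t) has_vector_derivative J t) (at t within {0..2*pi})"
      unfolding J_def by (rule has_vector_derivative_add)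
  qed
  have val: "Im (\<Theta> (2*pi)) + f (2*pi) - (Im (\<Theta> 0) + f 0) = 2 * (of_int k + 1) * pi"
    using Imd f_per[of 0] by (simp add: algebra_simps)
  have pw: "sqrt ((deriv \<rho> \<beta> / \<rho> \<beta>)\<^sup>2 + (deriv f \<beta>)\<^sup>2) = (1/c) * J \<beta>" for \<beta>
  proof -
    define r where "r = \<rho> \<beta>"
    define r1 where "r1 = deriv \<rho> \<beta>"
    define r2 where "r2 = deriv (deriv \<rho>) \<beta>"
    define w1 where "w1 = deriv f \<beta>"
    define w2 where "w2 = deriv (deriv f) \<beta>"
    have r: "r > 0" using rho_pos by (simp add: r_def)
    have "((\<lambda>x. deriv \<rho> x / \<rho> x) has_real_derivative (r2 * r - r1 * r1) / (r * r)) (at \<beta>)"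
      using DERIV_divide[OF rdd[of \<beta>] rd[of \<beta>]] r by (simp add: r_def r1_def r2_def)
    then have dv: "deriv (\<lambda>x. deriv \<rho> x / \<rho> x) \<beta> = (r2 * r - r1^2) / r^2"
      by (simp add: DERIV_imp_deriv power2_eq_square)
    have Z1: "complex_of_real (deriv \<rho> \<beta>) + \<i> * complex_of_real (\<rho> \<beta> * deriv f \<beta>) = Complex r1 (r * w1)"
      by (simp add: complex_eq_iff r_def r1_def w1_def)
    have Z2: "complex_of_real (deriv (deriv \<rho>) \<beta> - \<rho> \<beta> * deriv f \<beta> * deriv f \<beta>)
      + \<i> * complex_of_real (deriv \<rho> \<beta> * deriv f \<beta> + \<rho> \<beta> * deriv (deriv f) \<beta> + deriv \<rho> \<beta> * deriv f \<beta>)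
        = Complex (r2 - r * w1 * w1) (r1 * w1 + r * w2 + r1 * w1)"
      by (simp add: complex_eq_iff r_def r1_def r2_def w1_def w2_def)
    have Enz: "E \<beta> \<noteq> 0" by (simp add: E_def)
    have "Complex r1 (r * w1) \<noteq> 0" using nz[of \<beta>] unfolding \<gamma>'_def Z1 by simp
    then have nz2: "r1 \<noteq> 0 \<or> w1 \<noteq> 0" by (auto simp: complex_eq_iff)
    then have S: "r1^2 + (r * w1)^2 > 0" using r by (auto simp: sum_power2_gt_zero_iff)
    have Z: "\<gamma>'' \<beta> / \<gamma>' \<beta> = Complex (r2 - r * w1 * w1) (r1 * w1 + r * w2 + r1 * w1) / Complex r1 (r * w1)"
      unfolding \<gamma>''_def \<gamma>'_def Z1 Z2 by (rule mult_divide_mult_cancel_right[OF Enz])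
    define Q where "Q = (r1 / r)^2 + w1^2"
    have Qp: "Q > 0" using nz2 r unfolding Q_def by (auto simp: sum_power2_gt_zero_iff)
    have Qpow: "Q powr (3/2) = Q * sqrt Q"
    proof -
      have "Q powr (3/2) = Q powr (1 + 1/2)" by simp
      also have "\<dots> = Q powr 1 * Q powr (1/2)" by (rule powr_add)
      also have "\<dots> = Q * Q powr (1/2)" using Qp by simp
      finally show ?thesis using Qp by (simp add: powr_half_sqrt)
    qed
    define N where "N = w2 * (r1 / r) - w1 * ((r2 * r - r1^2) / r^2) + 2 * w1 * Q"
    have ce: "N / (Q powr (3/2)) = c"
      using c_eq[of \<beta>] dv unfolding N_def Q_def by (simp add: Let_def r_def r1_def r2_def w1_def w2_def)
    have "N = c * Q * sqrt Q" using ce Qp unfolding Qpow by (simp add: field_simps)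
    then have NQ: "N / Q = c * sqrt Q" using Qp by (simp add: field_simps)
    have "N / Q = J \<beta>"
      using alg_identity[of r r1 w1 w2 r2, OF r S] unfolding J_def Z N_def Q_def by (simp add: w1_def)
    then have "J \<beta> = c * sqrt Q" using NQ by simp
    then show ?thesis using c_nz unfolding Q_def r_def r1_def w1_def by (simp add: field_simps)
  qed
  have "((\<lambda>\<beta>. sqrt ((deriv \<rho> \<beta> / \<rho> \<beta>)\<^sup>2 + (deriv f \<beta>)\<^sup>2)) has_integral (1/c) * (2 * (of_int k + 1) * pi)) {0..2*pi}"
    unfolding pw using has_integral_mult_right[OF FT, of "1/c"] val by simp
  then show ?thesis by (simp add: integral_unique)
qed


end
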